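(* Let $x,p\in\mathbb{R}^d$ with $\lVert x\rVert=1$ and $\lVert p\rVert>1$, and let $y=\frac{p+x}{\lVert p+x\rVert}$. Then $$\Big\lVert\frac{p}{\lVert p\rVert}-y\Big\rVert\le\sqrt{2-2\sqrt{1-\frac{1}{\lVert p\rVert^2}}}.$$
   Context: $\lVert\cdot\rVert$ denotes the Euclidean norm on $\mathbb{R}^d$. *)

theory Defs
  imports "HOL-Analysis.Analysis"
begin

end

theory Submission
  imports Defs
begin

theorem lemma3:
  fixes x p :: "real ^ 'n"
  assumes "norm x = 1" and "norm p > 1"
  shows "norm (p /\<^sub>R norm p - (p + x) /\<^sub>R norm (p + x))
           \<le> sqrt (2 - 2 * sqrt (1 - 1 / (norm p)\<^sup>2))"
proof -
  define r where "r = norm p"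
  define s where "s = norm (p + x)"
  define t where "t = p \<bullet> x"
  have r1: "r > 1" using assms r_def by simp
  have pp: "p \<bullet> p = r\<^sup>2" by (simp add: r_def dot_square_norm)
  have xx: "x \<bullet> x = 1" using assms by (simp add: dot_square_norm)
  have tb: "\<bar>t\<bar> \<le> r" using Cauchy_Schwarz_ineq2[of p x] assms by (simp add: t_def r_def)
  have s2: "s\<^sup>2 = r\<^sup>2 + 2*t + 1"
    unfolding s_def power2_norm_eq_inner using pp xx
    by (simp add: inner_add_left inner_add_right inner_commute t_def)
  have "s \<ge> r - 1" unfolding s_def r_def using norm_triangle_ineq2[of p "-x"] assms by simp
  hence sp: "s > 0" using r1 by simp
  have tp: "r\<^sup>2 + t > 0" using tb r1 by (smt (verit) power2_eq_square mult_less_cancel_left1)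
  define u where "u = p /\<^sub>R r"
  define y where "y = (p + x) /\<^sub>R s"
  have uu: "u \<bullet> u = 1" using pp r1 by (simp add: u_def power2_eq_square field_simps)
  have yy: "y \<bullet> y = 1" using sp unfolding y_def s_def by (simp add: power2_norm_eq_inner[symmetric] power2_eq_square)
  have uy: "u \<bullet> y = (r\<^sup>2 + t) / (r * s)"
  proof -
    have "u \<bullet> y = (p \<bullet> (p + x)) / (r * s)" by (simp add: u_def y_def divide_inverse mult_ac)
    also have "p \<bullet> (p + x) = r\<^sup>2 + t" using pp by (simp add: inner_add_right t_def)
    finally show ?thesis .
  qed
  have n2: "(norm (u - y))\<^sup>2 = 2 - 2 * (u \<bullet> y)"
    unfolding power2_norm_eq_inner using uu yy by (simp add: inner_diff_left inner_diff_right inner_commute)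
  have key: "s * sqrt (r\<^sup>2 - 1) \<le> r\<^sup>2 + t"
  proof -
    have "(s * sqrt (r\<^sup>2 - 1))\<^sup>2 = s\<^sup>2 * (r\<^sup>2 - 1)" using r1 by (simp add: power_mult_distrib)
    also have "\<dots> \<le> (r\<^sup>2 + t)\<^sup>2"
    proof -
      have "(r\<^sup>2 + t)\<^sup>2 - s\<^sup>2 * (r\<^sup>2 - 1) = (t+1)\<^sup>2"
        unfolding s2 by (simp add: algebra_simps power2_eq_square)
      moreover have "(t+1)\<^sup>2 \<ge> 0" by simp
      ultimately show ?thesis by linarith
    qed
    finally have h: "(s * sqrt (r\<^sup>2 - 1))\<^sup>2 \<le> (r\<^sup>2 + t)\<^sup>2" .
    show ?thesis by (rule power2_le_imp_le[OF h]) (use tp in linarith)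
  qed
  have sq: "sqrt (1 - 1 / r\<^sup>2) = sqrt (r\<^sup>2 - 1) / r"
  proof -
    have "1 - 1 / r\<^sup>2 = (r\<^sup>2 - 1) / r\<^sup>2" using r1 by (simp add: field_simps)
    thus ?thesis using r1 by (simp add: real_sqrt_divide)
  qed
  have ge: "sqrt (1 - 1 / r\<^sup>2) \<le> u \<bullet> y"
    unfolding sq uy using key r1 sp by (simp add: field_simps)
  have "norm (u - y) = sqrt (2 - 2 * (u \<bullet> y))" using n2 by (metis norm_ge_zero real_sqrt_unique)
  also have "\<dots> \<le> sqrt (2 - 2 * sqrt (1 - 1 / r\<^sup>2))" using ge by simp
  finally show ?thesis unfolding u_def y_def r_def s_def .
qed

end
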